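(* Fix a state $s$, a utility $u:\mathcal S\times\Omega\times\mathcal A\to[0,1]$, a function $Q:\mathcal S\times\Omega\times\mathcal A\to[0,H]$ and priors $\mu_1,\mu_2\in\Delta(\Omega)$, and let $\mathcal B_{1,2}=\mathbb B(\mu_1,\|\mu_1-\mu_2\|_1)$. Then $$\max_{\pi_1\in\mathrm{Pers}(\mu_1,u)}\langle Q,\mu_1\otimes\pi_1\rangle(s)-\max_{\pi_2\in\mathrm{Pers}(\mu_2,u)}\langle Q,\mu_2\otimes\pi_2\rangle(s)\le\mathrm{Gap}(s,\mu_1,\mathcal B_{1,2};Q)+\frac H2\|\mu_1-\mu_2\|_1.$$
   Context: $\mathcal A$ is a finite action set, $\mathcal S$ a state space and $\Omega$ an outcome space; $\Delta(\Omega)$ is the set of probability distributions on $\Omega$ (with densities/mass functions $\mu(\omega)$), and $\|\mu-\mu'\|_1=\int_\Omega|\mu(\omega)-\mu'(\omega)|\,\mathrm d\omega$. A signaling scheme $\pi$ assigns to each $(s,\omega)$ a distribution $\pi(\cdot\mid s,\omega)\in\Delta(\mathcal A)$. For a prior $\mu$ and utility $u$, $\mathrm{Pers}(\mu,u)$ is the set of $\pi$ with $\int_\Omega\mu(\omega)\pi(a\mid s,\omega)[u(s,\omega,a)-u(s,\omega,a')]\,\mathrm d\omega\ge0$ for all $a,a'\in\mathcal A$ and states $s$; for a set $\mathcal B\subseteq\Delta(\Omega)$, $\mathrm{Pers}(\mathcal B,u)=\bigcap_{\mu'\in\mathcal B}\mathrm{Pers}(\mu',u)$. $\langle Q,\mu\otimes\pi\rangle(s)=\mathbb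 E_{\omega\sim\mu,\,a\sim\pi(\cdot\mid s,\omega)}[Q(s,\omega,a)]$. The robustness gap is $\mathrm{Gap}(s,\mu,\mathcal B;Q)=\max_{\pi\in\mathrm{Pers}(\mu,u)}\langle Q,\mu\otimes\pi\rangle(s)-\max_{\pi\in\mathrm{Pers}(\mathcal B,u)}\langle Q,\mu\otimes\pi\rangle(s)$. $\mathbb B(\mu,\epsilon)=\{\mu'\in\Delta(\Omega):\|\mu-\mu'\|_1\le\epsilon\}$. *)

theory Defs
  imports "HOL-Analysis.Analysis"
begin

text \<open>The outcome space \<Omega> is the space of a reference measure M; priors are
  probability densities w.r.t. M. Actions form a finite type 'a; states a type 's.\<close>

definition prior :: "'w measure \<Rightarrow> ('w \<Rightarrow> real) \<Rightarrow> bool" where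
  "prior M \<mu> \<longleftrightarrow> \<mu> \<in> borel_measurable M \<and> (\<forall>\<omega>\<in>space M. 0 \<le> \<mu> \<omega>)
     \<and> integrable M \<mu> \<and> (\<integral>\<omega>. \<mu> \<omega> \<partial>M) = 1"

definition l1dist :: "'w measure \<Rightarrow> ('w \<Rightarrow> real) \<Rightarrow> ('w \<Rightarrow> real) \<Rightarrow> real" where
  "l1dist M \<mu> \<mu>' = (\<integral>\<omega>. \<bar>\<mu> \<omega> - \<mu>' \<omega>\<bar> \<partial>M)"

definition l1ball :: "'w measure \<Rightarrow> ('w \<Rightarrow> real) \<Rightarrow> real \<Rightarrow> ('w \<Rightarrow> real) set" where
  "l1ball M \<mu> \<epsilon> = {\<mu>'. prior M \<mu>' \<and> l1dist M \<mu> \<mu>' \<le> \<epsilon>}"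

text \<open>A signaling scheme: \<pi> s \<omega> a = \<pi>(a | s, \<omega>), a probability distribution over
  the finite action type for each (s, \<omega>), measurable in \<omega>.\<close>
definition scheme :: "'w measure \<Rightarrow> ('s \<Rightarrow> 'w \<Rightarrow> 'a::finite \<Rightarrow> real) \<Rightarrow> bool" where
  "scheme M \<pi> \<longleftrightarrow> (\<forall>s \<omega> a. 0 \<le> \<pi> s \<omega> a) \<and> (\<forall>s \<omega>. (\<Sum>a\<in>UNIV. \<pi> s \<omega> a) = 1)
     \<and> (\<forall>s a. (\<lambda>\<omega>. \<pi> s \<omega> a) \<in> borel_measurable M)"

definition Pers :: "'w measure \<Rightarrow> ('w \<Rightarrow> real) \<Rightarrow> ('s \<Rightarrow> 'w \<Rightarrow> 'a::finite \<Rightarrow> real)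
    \<Rightarrow> ('s \<Rightarrow> 'w \<Rightarrow> 'a \<Rightarrow> real) set" where
  "Pers M \<mu> u = {\<pi>. scheme M \<pi> \<and> (\<forall>s a a'.
      0 \<le> (\<integral>\<omega>. \<mu> \<omega> * \<pi> s \<omega> a * (u s \<omega> a - u s \<omega> a') \<partial>M))}"

definition PersSet :: "'w measure \<Rightarrow> ('w \<Rightarrow> real) set \<Rightarrow> ('s \<Rightarrow> 'w \<Rightarrow> 'a::finite \<Rightarrow> real)
    \<Rightarrow> ('s \<Rightarrow> 'w \<Rightarrow> 'a \<Rightarrow> real) set" where
  "PersSet M B u = {\<pi>. scheme M \<pi> \<and> (\<forall>\<mu>'\<in>B. \<pi> \<in> Pers M \<mu>' u)}"

definition pairing :: "'w measure \<Rightarrow> ('s \<Rightarrow> 'w \<Rightarrow> 'a::finite \<Rightarrow> real) \<Rightarrow> ('w \<Rightarrow> real)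
    \<Rightarrow> ('s \<Rightarrow> 'w \<Rightarrow> 'a \<Rightarrow> real) \<Rightarrow> 's \<Rightarrow> real" where
  "pairing M Q \<mu> \<pi> s = (\<integral>\<omega>. \<mu> \<omega> * (\<Sum>a\<in>UNIV. \<pi> s \<omega> a * Q s \<omega> a) \<partial>M)"

text \<open>The "max" over a set of schemes, rendered as a supremum.\<close>
definition optval :: "'w measure \<Rightarrow> ('s \<Rightarrow> 'w \<Rightarrow> 'a::finite \<Rightarrow> real) \<Rightarrow> ('w \<Rightarrow> real)
    \<Rightarrow> ('s \<Rightarrow> 'w \<Rightarrow> 'a \<Rightarrow> real) set \<Rightarrow> 's \<Rightarrow> real" where
  "optval M Q \<mu> P s = (SUP \<pi>\<in>P. pairing M Q \<mu> \<pi> s)"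

definition Gap :: "'w measure \<Rightarrow> ('s \<Rightarrow> 'w \<Rightarrow> 'a::finite \<Rightarrow> real) \<Rightarrow> 's \<Rightarrow> ('w \<Rightarrow> real)
    \<Rightarrow> ('w \<Rightarrow> real) set \<Rightarrow> ('s \<Rightarrow> 'w \<Rightarrow> 'a \<Rightarrow> real) \<Rightarrow> real" where
  "Gap M u s \<mu> B Q = optval M Q \<mu> (Pers M \<mu> u) s - optval M Q \<mu> (PersSet M B u) s"

end

theory Submission
  imports Defs
begin

definition argsch :: "('s \<Rightarrow> 'w \<Rightarrow> 'a::finite \<Rightarrow> real) \<Rightarrow> 's \<Rightarrow> 'w \<Rightarrow> 'a \<Rightarrow> real" where
  "argsch u s \<omega> a = (if u s \<omega> a = (MAX b. u s \<omega> b) then 1 else 0) /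
     (\<Sum>b\<in>UNIV. if u s \<omega> b = (MAX c. u s \<omega> c) then 1 else 0)"

lemma argsch_cnt_pos:
  fixes u :: "'s \<Rightarrow> 'w \<Rightarrow> 'a::finite \<Rightarrow> real"
  shows
  "(\<Sum>b\<in>UNIV. if u s \<omega> b = (MAX c. u s \<omega> c) then 1 else 0::real) \<ge> 1"
proof -
  have "(MAX c. u s \<omega> c) \<in> range (u s \<omega>)" by (rule Max_in) auto
  then obtain b where b: "u s \<omega> b = (MAX c. u s \<omega> c)" by (metis imageE)
  have "(1::real) = (if u s \<omega> b = (MAX c. u s \<omega> c) then 1 else 0)" using b by simp
  also have "\<dots> \<le> (\<Sum>b\<in>UNIV. if u s \<omega> b = (MAX c. u s \<omega> c) then 1 else 0::real)"
    by (rule member_le_sum) auto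
  finally show ?thesis .
qed

lemma argsch_scheme:
  assumes "\<And>s a. (\<lambda>\<omega>. u s \<omega> a) \<in> borel_measurable M"
  shows "scheme M (argsch u)"
  unfolding scheme_def
proof (intro conjI allI)
  fix s \<omega> a show "0 \<le> argsch u s \<omega> a"
    unfolding argsch_def using argsch_cnt_pos[of u s \<omega>] by auto
next
  fix s \<omega>
  have c: "(\<Sum>b\<in>UNIV. if u s \<omega> b = (MAX c. u s \<omega> c) then 1 else 0::real) \<noteq> 0"
    using argsch_cnt_pos[of u s \<omega>] by auto
  show "(\<Sum>a\<in>UNIV. argsch u s \<omega> a) = 1"
    unfolding argsch_def sum_divide_distrib[symmetric] using c by simp
next
  fix s a
  have m: "\<And>a. (\<lambda>\<omega>. u s \<omega> a) \<in> borel_measurable M" using assms .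
  show "(\<lambda>\<omega>. argsch u s \<omega> a) \<in> borel_measurable M"
    unfolding argsch_def using m by measurable
qed

lemma argsch_pers:
  assumes "\<And>s a. (\<lambda>\<omega>. u s \<omega> a) \<in> borel_measurable M"
    and "\<forall>\<omega>\<in>space M. 0 \<le> \<mu> \<omega>"
  shows "argsch u \<in> Pers M \<mu> u"
  unfolding Pers_def
proof (intro CollectI conjI allI)
  show "scheme M (argsch u)" using argsch_scheme assms(1) .
next
  fix s a a'
  show "0 \<le> (\<integral>\<omega>. \<mu> \<omega> * argsch u s \<omega> a * (u s \<omega> a - u s \<omega> a') \<partial>M)"
  proof (rule integral_nonneg_AE, rule AE_I2)
    fix \<omega> assume w: "\<omega> \<in> space M"
    have p: "0 \<le> argsch u s \<omega> a"
      unfolding argsch_def using argsch_cnt_pos[of u s \<omega>] by auto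
    have "0 \<le> argsch u s \<omega> a * (u s \<omega> a - u s \<omega> a')"
    proof (cases "u s \<omega> a = (MAX b. u s \<omega> b)")
      case True
      have "u s \<omega> a' \<le> (MAX b. u s \<omega> b)" by (rule Max_ge) auto
      then show ?thesis using True p by simp
    next
      case False then show ?thesis unfolding argsch_def by simp
    qed
    then show "0 \<le> \<mu> \<omega> * argsch u s \<omega> a * (u s \<omega> a - u s \<omega> a')"
      using assms(2) w by (simp add: mult.assoc)
  qed
qed

theorem mainTheorem9:
  fixes M :: "'w measure"
    and u Q :: "'s \<Rightarrow> 'w \<Rightarrow> 'a::finite \<Rightarrow> real"
    and H :: real and s :: 's
    and \<mu>1 \<mu>2 :: "'w \<Rightarrow> real"
  assumes u_range: "\<And>s \<omega> a. 0 \<le> u s \<omega> a \<and> u s \<omega> a \<le> 1"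
    and Q_range: "\<And>s \<omega> a. 0 \<le> Q s \<omega> a \<and> Q s \<omega> a \<le> H"
    and u_meas: "\<And>s a. (\<lambda>\<omega>. u s \<omega> a) \<in> borel_measurable M"
    and Q_meas: "\<And>s a. (\<lambda>\<omega>. Q s \<omega> a) \<in> borel_measurable M"
    and p1: "prior M \<mu>1" and p2: "prior M \<mu>2"
  shows "optval M Q \<mu>1 (Pers M \<mu>1 u) s - optval M Q \<mu>2 (Pers M \<mu>2 u) s
           \<le> Gap M u s \<mu>1 (l1ball M \<mu>1 (l1dist M \<mu>1 \<mu>2)) Q + H / 2 * l1dist M \<mu>1 \<mu>2"
proof -
  define B where "B = l1ball M \<mu>1 (l1dist M \<mu>1 \<mu>2)"
  define d where "d = l1dist M \<mu>1 \<mu>2"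
  have H0: "0 \<le> H" using Q_range[of s undefined undefined] by linarith
  have m1: "\<mu>1 \<in> borel_measurable M" "integrable M \<mu>1" "\<forall>\<omega>\<in>space M. 0 \<le> \<mu>1 \<omega>"
    "(\<integral>\<omega>. \<mu>1 \<omega> \<partial>M) = 1" using p1 unfolding prior_def by auto
  have m2: "\<mu>2 \<in> borel_measurable M" "integrable M \<mu>2" "\<forall>\<omega>\<in>space M. 0 \<le> \<mu>2 \<omega>"
    "(\<integral>\<omega>. \<mu>2 \<omega> \<partial>M) = 1" using p2 unfolding prior_def by auto
  have mu2B: "\<mu>2 \<in> B" unfolding B_def l1ball_def using p2 by simp
  have key: "pairing M Q \<mu>1 \<pi> s \<le> pairing M Q \<mu>2 \<pi> s + H / 2 * d" if sch: "scheme M \<pi>" for \<pi>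
  proof -
    define f where "f \<omega> = (\<Sum>a\<in>UNIV. \<pi> s \<omega> a * Q s \<omega> a)" for \<omega>
    have fm: "f \<in> borel_measurable M" unfolding f_def using sch Q_meas unfolding scheme_def
      by (intro borel_measurable_sum borel_measurable_times) auto
    have fb: "0 \<le> f \<omega> \<and> f \<omega> \<le> H" for \<omega>
    proof -
      have "f \<omega> \<le> (\<Sum>a\<in>UNIV. \<pi> s \<omega> a * H)" unfolding f_def
        using sch Q_range unfolding scheme_def by (intro sum_mono mult_left_mono) auto
      also have "\<dots> = H" using sch unfolding scheme_def by (simp add: sum_distrib_right[symmetric])
      finally show ?thesis unfolding f_def using sch Q_range unfolding scheme_def
        by (auto intro: sum_nonneg)
    qed
    have int: "integrable M (\<lambda>\<omega>. \<mu> \<omega> * f \<omega>)" if "\<mu> \<in> borel_measurable M" "integrable M \<mu>"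
      "\<forall>\<omega>\<in>space M. 0 \<le> \<mu> \<omega>" for \<mu>
    proof (rule Bochner_Integration.integrable_bound[where f="\<lambda>\<omega>. H * \<mu> \<omega>"])
      show "integrable M (\<lambda>\<omega>. H * \<mu> \<omega>)" using that by simp
      show "(\<lambda>\<omega>. \<mu> \<omega> * f \<omega>) \<in> borel_measurable M" using that fm by measurable
      show "AE \<omega> in M. norm (\<mu> \<omega> * f \<omega>) \<le> norm (H * \<mu> \<omega>)"
      proof (rule AE_I2)
        fix \<omega> assume "\<omega> \<in> space M"
        then have "0 \<le> \<mu> \<omega>" using that by auto
        then show "norm (\<mu> \<omega> * f \<omega>) \<le> norm (H * \<mu> \<omega>)"
          using fb[of \<omega>] H0 by (simp add: abs_mult mult.commute mult_left_mono)
            (metis mult.commute mult_left_mono)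
      qed
    qed
    have i1: "integrable M (\<lambda>\<omega>. \<mu>1 \<omega> * f \<omega>)" using int m1 by auto
    have i2: "integrable M (\<lambda>\<omega>. \<mu>2 \<omega> * f \<omega>)" using int m2 by auto
    have "pairing M Q \<mu>1 \<pi> s - pairing M Q \<mu>2 \<pi> s
        = (\<integral>\<omega>. \<mu>1 \<omega> * f \<omega> \<partial>M) - (\<integral>\<omega>. \<mu>2 \<omega> * f \<omega> \<partial>M)"
      unfolding pairing_def f_def by simp
    also have "\<dots> = ((\<integral>\<omega>. \<mu>1 \<omega> * f \<omega> \<partial>M) - H/2 * (\<integral>\<omega>. \<mu>1 \<omega> \<partial>M))
        - ((\<integral>\<omega>. \<mu>2 \<omega> * f \<omega> \<partial>M) - H/2 * (\<integral>\<omega>. \<mu>2 \<omega> \<partial>M))"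
      using m1 m2 by simp
    also have "\<dots> = (\<integral>\<omega>. (\<mu>1 \<omega> - \<mu>2 \<omega>) * (f \<omega> - H/2) \<partial>M)"
    proof -
      have "(\<integral>\<omega>. (\<mu>1 \<omega> - \<mu>2 \<omega>) * (f \<omega> - H/2) \<partial>M)
          = (\<integral>\<omega>. (\<mu>1 \<omega> * f \<omega> - H/2 * \<mu>1 \<omega>) - (\<mu>2 \<omega> * f \<omega> - H/2 * \<mu>2 \<omega>) \<partial>M)"
        by (rule Bochner_Integration.integral_cong) (simp_all add: algebra_simps add_divide_distrib diff_divide_distrib)
      also have "\<dots> = ((\<integral>\<omega>. \<mu>1 \<omega> * f \<omega> \<partial>M) - H/2 * (\<integral>\<omega>. \<mu>1 \<omega> \<partial>M))
        - ((\<integral>\<omega>. \<mu>2 \<omega> * f \<omega> \<partial>M) - H/2 * (\<integral>\<omega>. \<mu>2 \<omega> \<partial>M))"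
        using i1 i2 m1 m2 by simp
      finally show ?thesis by simp
    qed
    also have "\<dots> \<le> (\<integral>\<omega>. H/2 * \<bar>\<mu>1 \<omega> - \<mu>2 \<omega>\<bar> \<partial>M)"
    proof (rule integral_mono)
      have "integrable M (\<lambda>\<omega>. (\<mu>1 \<omega> * f \<omega> - H/2 * \<mu>1 \<omega>) - (\<mu>2 \<omega> * f \<omega> - H/2 * \<mu>2 \<omega>))"
        using i1 i2 m1 m2 by simp
      then show "integrable M (\<lambda>\<omega>. (\<mu>1 \<omega> - \<mu>2 \<omega>) * (f \<omega> - H/2))"
        by (rule back_subst[where P="integrable M"]) (auto simp: algebra_simps add_divide_distrib diff_divide_distrib)
      show "integrable M (\<lambda>\<omega>. H/2 * \<bar>\<mu>1 \<omega> - \<mu>2 \<omega>\<bar>)" using m1 m2 by simp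
      fix \<omega>
      have "\<bar>f \<omega> - H/2\<bar> \<le> H/2" unfolding abs_le_iff using fb[of \<omega>] by linarith
      then have "(\<mu>1 \<omega> - \<mu>2 \<omega>) * (f \<omega> - H/2) \<le> \<bar>\<mu>1 \<omega> - \<mu>2 \<omega>\<bar> * (H/2)"
        by (metis abs_ge_self abs_mult abs_ge_zero mult_left_mono order_trans)
      then show "(\<mu>1 \<omega> - \<mu>2 \<omega>) * (f \<omega> - H/2) \<le> H/2 * \<bar>\<mu>1 \<omega> - \<mu>2 \<omega>\<bar>" by (simp add: mult.commute)
    qed
    also have "\<dots> = H/2 * d" unfolding d_def l1dist_def by simp
    finally show ?thesis by simp
  qed
  have bdd2: "bdd_above ((\<lambda>\<pi>. pairing M Q \<mu>2 \<pi> s) ` Pers M \<mu>2 u)"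
  proof -
    have "pairing M Q \<mu>2 \<pi> s \<le> H" if "\<pi> \<in> Pers M \<mu>2 u" for \<pi>
    proof -
      have sch: "scheme M \<pi>" using that unfolding Pers_def by auto
      define f where "f \<omega> = (\<Sum>a\<in>UNIV. \<pi> s \<omega> a * Q s \<omega> a)" for \<omega>
      have fm: "f \<in> borel_measurable M" unfolding f_def using sch Q_meas unfolding scheme_def
        by (intro borel_measurable_sum borel_measurable_times) auto
      have fb: "0 \<le> f \<omega> \<and> f \<omega> \<le> H" for \<omega>
      proof -
        have "f \<omega> \<le> (\<Sum>a\<in>UNIV. \<pi> s \<omega> a * H)" unfolding f_def
          using sch Q_range unfolding scheme_def by (intro sum_mono mult_left_mono) auto
        also have "\<dots> = H" using sch unfolding scheme_def by (simp add: sum_distrib_right[symmetric])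
        finally show ?thesis unfolding f_def using sch Q_range unfolding scheme_def
          by (auto intro: sum_nonneg)
      qed
      have i: "integrable M (\<lambda>\<omega>. \<mu>2 \<omega> * f \<omega>)"
      proof (rule Bochner_Integration.integrable_bound[where f="\<lambda>\<omega>. H * \<mu>2 \<omega>"])
        show "integrable M (\<lambda>\<omega>. H * \<mu>2 \<omega>)" using m2 by simp
        show "(\<lambda>\<omega>. \<mu>2 \<omega> * f \<omega>) \<in> borel_measurable M" using m2 fm by measurable
        show "AE \<omega> in M. norm (\<mu>2 \<omega> * f \<omega>) \<le> norm (H * \<mu>2 \<omega>)"
        proof (rule AE_I2)
          fix \<omega> assume "\<omega> \<in> space M"
          then have "0 \<le> \<mu>2 \<omega>" using m2 by auto
          then show "norm (\<mu>2 \<omega> * f \<omega>) \<le> norm (H * \<mu>2 \<omega>)"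
            using fb[of \<omega>] H0 by (simp add: abs_mult mult.commute mult_left_mono)
            (metis mult.commute mult_left_mono)
        qed
      qed
      have "pairing M Q \<mu>2 \<pi> s = (\<integral>\<omega>. \<mu>2 \<omega> * f \<omega> \<partial>M)" unfolding pairing_def f_def by simp
      also have "\<dots> \<le> (\<integral>\<omega>. H * \<mu>2 \<omega> \<partial>M)"
      proof (rule integral_mono_AE[OF i])
        show "integrable M (\<lambda>\<omega>. H * \<mu>2 \<omega>)" using m2 by simp
        show "AE \<omega> in M. \<mu>2 \<omega> * f \<omega> \<le> H * \<mu>2 \<omega>"
        proof (rule AE_I2)
          fix \<omega> assume "\<omega> \<in> space M"
          then have "0 \<le> \<mu>2 \<omega>" using m2 by auto
          then show "\<mu>2 \<omega> * f \<omega> \<le> H * \<mu>2 \<omega>"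
            using fb[of \<omega>] by (metis mult.commute mult_left_mono)
        qed
      qed
      also have "\<dots> = H" using m2 by simp
      finally show ?thesis .
    qed
    then show ?thesis by (intro bdd_aboveI2[where M=H]) auto
  qed
  have ne: "argsch u \<in> PersSet M B u"
    unfolding PersSet_def using argsch_scheme[OF u_meas] argsch_pers[OF u_meas]
    unfolding B_def l1ball_def prior_def by auto
  have "optval M Q \<mu>1 (PersSet M B u) s \<le> optval M Q \<mu>2 (Pers M \<mu>2 u) s + H/2 * d"
    unfolding optval_def
  proof (rule cSUP_least)
    show "PersSet M B u \<noteq> {}" using ne by auto
    fix \<pi> assume "\<pi> \<in> PersSet M B u"
    then have sch: "scheme M \<pi>" and pp: "\<pi> \<in> Pers M \<mu>2 u"
      unfolding PersSet_def using mu2B by auto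
    have "pairing M Q \<mu>1 \<pi> s \<le> pairing M Q \<mu>2 \<pi> s + H / 2 * d" using key sch .
    also have "pairing M Q \<mu>2 \<pi> s \<le> (SUP \<pi>\<in>Pers M \<mu>2 u. pairing M Q \<mu>2 \<pi> s)"
      by (rule cSUP_upper[OF pp bdd2])
    finally show "pairing M Q \<mu>1 \<pi> s \<le> (SUP \<pi>\<in>Pers M \<mu>2 u. pairing M Q \<mu>2 \<pi> s) + H / 2 * d"
      by simp
  qed
  then show ?thesis unfolding Gap_def B_def d_def by simp
qed

end
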